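(* Let $X\in T^1(\Sigma)$. Then $X^+X=X=XX^*$ (with pruned operations).
   Context: Let $\Sigma$ be a set. A $\Sigma$-tree is a finite directed graph whose underlying undirected graph is a tree, edges labelled by elements of $\Sigma$, with distinguished start and end vertices such that there is a (possibly empty) directed path from start to end vertex. A morphism $X\to Y$ maps vertices to vertices and edges to edges, preserving initial vertex, terminal vertex and label of each edge, and mapping start/end vertex to start/end vertex; isomorphisms are morphisms bijective on vertices and edges. A retraction is an idempotent morphism $X\to X$, its image a retract; $X$ is pruned if it admits no non-identity retraction. Every tree $X$ has a pruned retract, unique up to isomorphism, whose isomorphism type is $\overline{X}$. $T^1(\Sigma)$ is the set of isomorphism types of pruned $\Sigma$-trees. Unpruned operations: $X\times Y$ identifies the end vertex of (a copy of) $X$ with the start vertex of (a disjoint copy of) $Y$, start vertex that of $X$, end vertex that of $Y$; $X^{(+)}$ is $X$ with end vertex moved to the start vertex; $X^{( * )}$ is $X$ with start vertex moved to the end vertex. Pruned operations: $XY=\overline{X\times Y}$, $X^+=\overline{X^{(+)}}$, $X^*=\overline{X^{( * )}}$. *)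

theory Defs
  imports Main
begin

record ('v, 'l) stree =
  verts :: "'v set"
  edges :: "('v \<times> 'l \<times> 'v) set"
  st :: 'v
  en :: 'v

definition undir_adj :: "('v, 'l) stree \<Rightarrow> ('v \<times> 'v) set" where
  "undir_adj X = {(u, v). \<exists>a. (u, a, v) \<in> edges X \<or> (v, a, u) \<in> edges X}"

definition dir_adj :: "('v, 'l) stree \<Rightarrow> ('v \<times> 'v) set" where
  "dir_adj X = {(u, v). \<exists>a. (u, a, v) \<in> edges X}"

text \<open>The underlying undirected multigraph is a tree: it is connected and has
  exactly |V| - 1 edges.\<close>
definition is_tree :: "'l set \<Rightarrow> ('v, 'l) stree \<Rightarrow> bool" where
  "is_tree Sig X \<longleftrightarrow>
     finite (verts X) \<and> verts X \<noteq> {} \<and>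
     edges X \<subseteq> verts X \<times> Sig \<times> verts X \<and>
     finite (edges X) \<and> card (edges X) + 1 = card (verts X) \<and>
     (\<forall>u\<in>verts X. \<forall>v\<in>verts X. (u, v) \<in> (undir_adj X)\<^sup>*) \<and>
     st X \<in> verts X \<and> en X \<in> verts X \<and>
     (st X, en X) \<in> (dir_adj X)\<^sup>*"

definition emap :: "('v \<Rightarrow> 'w) \<Rightarrow> 'v \<times> 'l \<times> 'v \<Rightarrow> 'w \<times> 'l \<times> 'w" where
  "emap f e = (case e of (u, a, v) \<Rightarrow> (f u, a, f v))"

definition morph :: "('v, 'l) stree \<Rightarrow> ('w, 'l) stree \<Rightarrow> ('v \<Rightarrow> 'w) \<Rightarrow> bool" where
  "morph X Y f \<longleftrightarrow>
     f ` verts X \<subseteq> verts Y \<and> emap f ` edges X \<subseteq> edges Y \<and>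
     f (st X) = st Y \<and> f (en X) = en Y"

definition tiso :: "('v, 'l) stree \<Rightarrow> ('w, 'l) stree \<Rightarrow> bool" where
  "tiso X Y \<longleftrightarrow> (\<exists>f. morph X Y f \<and> bij_betw f (verts X) (verts Y) \<and>
                        bij_betw (emap f) (edges X) (edges Y))"

definition retraction :: "('v, 'l) stree \<Rightarrow> ('v \<Rightarrow> 'v) \<Rightarrow> bool" where
  "retraction X r \<longleftrightarrow> morph X X r \<and> (\<forall>v\<in>verts X. r (r v) = r v)"

definition retract_img :: "('v, 'l) stree \<Rightarrow> ('v \<Rightarrow> 'v) \<Rightarrow> ('v, 'l) stree" where
  "retract_img X r = \<lparr>verts = r ` verts X, edges = emap r ` edges X, st = st X, en = en X\<rparr>"

definition pruned :: "('v, 'l) stree \<Rightarrow> bool" where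
  "pruned X \<longleftrightarrow> (\<forall>r. retraction X r \<longrightarrow> (\<forall>v\<in>verts X. r v = v))"

text \<open>Membership (of the isomorphism type) in T^1(Sigma).\<close>
definition pruned_tree :: "'l set \<Rightarrow> ('v, 'l) stree \<Rightarrow> bool" where
  "pruned_tree Sig X \<longleftrightarrow> is_tree Sig X \<and> pruned X"

text \<open>Y is a pruned retract of X (so Y represents the type overline X).\<close>
definition is_pruned_retract :: "('v, 'l) stree \<Rightarrow> ('v, 'l) stree \<Rightarrow> bool" where
  "is_pruned_retract Y X \<longleftrightarrow> (\<exists>r. retraction X r \<and> Y = retract_img X r \<and> pruned Y)"

text \<open>Unpruned product: disjoint copies, end of X glued to start of Y.\<close>
definition injY :: "('v, 'l) stree \<Rightarrow> ('w, 'l) stree \<Rightarrow> 'w \<Rightarrow> 'v + 'w" where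
  "injY X Y y = (if y = st Y then Inl (en X) else Inr y)"

definition tprod :: "('v, 'l) stree \<Rightarrow> ('w, 'l) stree \<Rightarrow> ('v + 'w, 'l) stree" where
  "tprod X Y = \<lparr>verts = Inl ` verts X \<union> injY X Y ` verts Y,
                edges = emap Inl ` edges X \<union> emap (injY X Y) ` edges Y,
                st = Inl (st X), en = injY X Y (en Y)\<rparr>"

definition tplus :: "('v, 'l) stree \<Rightarrow> ('v, 'l) stree" where
  "tplus X = X\<lparr>en := st X\<rparr>"

definition tstar :: "('v, 'l) stree \<Rightarrow> ('v, 'l) stree" where
  "tstar X = X\<lparr>st := en X\<rparr>"

end

theory Submission imports Defs "HOL-Library.FuncSet" begin

definition ewf :: "('v, 'l) stree \<Rightarrow> bool" where
  "ewf A \<longleftrightarrow> edges A \<subseteq> verts A \<times> UNIV \<times> verts A"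

lemma emap_comp: "emap (g \<circ> f) = emap g \<circ> emap f"
  by (auto simp: emap_def fun_eq_iff split: prod.splits)

lemma emap_id: "emap id = id"
  by (auto simp: emap_def fun_eq_iff split: prod.splits)

lemma morph_comp: "morph X Y f \<Longrightarrow> morph Y Z g \<Longrightarrow> morph X Z (g \<circ> f)"
  unfolding morph_def emap_comp image_comp[symmetric] by (auto simp: image_comp[symmetric]) (blast+)?

lemma morph_pow: "morph A A e \<Longrightarrow> morph A A (e^^n)"
proof (induction n)
  case 0 then show ?case by (auto simp: morph_def emap_def split: prod.splits)
next
  case (Suc n)
  have "morph A A (e \<circ> e^^n)" using morph_comp[of A A "e^^n" A e] Suc by blast
  thus ?case by (simp only: funpow.simps)
qed

lemma pow_into: "e ` S \<subseteq> S \<Longrightarrow> v \<in> S \<Longrightarrow> (e^^k) v \<in> S"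
  by (induction k) auto

lemma idem_pow:
  assumes fin: "finite S" and into: "e ` S \<subseteq> S"
  shows "\<exists>n>0. \<forall>v\<in>S. (e^^n) ((e^^n) v) = (e^^n) v"
proof -
  define F where "F k = restrict (e^^k) S" for k
  have "range F \<subseteq> PiE S (\<lambda>_. S)" using pow_into[OF into] by (auto simp: F_def restrict_PiE_iff)
  hence "finite (range F)" using finite_PiE[OF fin, of "\<lambda>_. S"] fin by (meson finite_subset)
  hence "\<not> inj F" using finite_imageD infinite_UNIV_nat by blast
  then obtain i j where ij: "i \<noteq> j" "F i = F j" unfolding inj_def by blast
  have "\<exists>i j. i < j \<and> F i = F j" using ij by (metis linorder_neqE_nat)
  then obtain i j where ij: "i < j" "F i = F j" by blast
  have eq: "(e^^i) v = (e^^j) v" if "v \<in> S" for v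
    using ij(2) that unfolding F_def by (metis restrict_apply')
  define p where "p = j - i"
  have jp: "j = i + p" using ij p_def by simp
  have per: "(e^^(i+k+t*p)) v = (e^^(i+k)) v" if "v \<in> S" for t k v
  proof (induction t)
    case 0 then show ?case by simp
  next
    case (Suc t)
    have h: "i+k+Suc t*p = (k+t*p) + j" using jp by simp
    have "(e^^(i+k+Suc t*p)) v = (e^^(k+t*p)) ((e^^j) v)" by (simp only: h funpow_add comp_def)
    also have "\<dots> = (e^^(k+t*p)) ((e^^i) v)" using eq[OF that] by simp
    also have "\<dots> = (e^^(i+k+t*p)) v"
    proof -
      have h2: "i+k+t*p = (k+t*p) + i" by simp
      show ?thesis by (simp only: h2 funpow_add comp_def)
    qed
    finally show ?case using Suc by simp
  qed
  define n where "n = (i+1)*p"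
  have "p > 0" using ij p_def by simp
  hence n0: "n > 0" using n_def by auto
  have "(i+1)*1 \<le> (i+1)*p" by (rule mult_le_mono2) (use \<open>p > 0\<close> in simp)
  hence ni: "n \<ge> i" unfolding n_def by simp
  have "(e^^n) ((e^^n) v) = (e^^n) v" if "v \<in> S" for v
  proof -
    have "(e^^n) ((e^^n) v) = (e^^(i + (n-i) + (i+1)*p)) v" using ni n_def by (simp add: funpow_add)
    also have "\<dots> = (e^^(i+(n-i))) v" using per[OF that] by blast
    finally show ?thesis using ni by simp
  qed
  thus ?thesis using n0 by blast
qed

lemma pruned_endo_id:
  assumes "pruned A" "finite (verts A)" "morph A A e"
  shows "\<exists>n>0. \<forall>v\<in>verts A. (e^^n) v = v"
proof -
  have into: "e ` verts A \<subseteq> verts A" using assms(3) by (simp add: morph_def)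
  obtain n where n: "n > 0" "\<forall>v\<in>verts A. (e^^n) ((e^^n) v) = (e^^n) v"
    using idem_pow[OF assms(2) into] by blast
  have "retraction A (e^^n)" using n morph_pow[OF assms(3)] by (simp add: retraction_def)
  thus ?thesis using assms(1) n unfolding pruned_def by blast
qed

lemma pruned_endo_inj:
  assumes "pruned A" "finite (verts A)" "morph A A e"
  shows "inj_on e (verts A)"
proof
  fix x y assume xy: "x \<in> verts A" "y \<in> verts A" "e x = e y"
  obtain n where n: "n > 0" "\<forall>v\<in>verts A. (e^^n) v = v" using pruned_endo_id[OF assms] by blast
  then obtain m where m: "n = Suc m" using gr0_implies_Suc by blast
  have "(e^^n) x = (e^^m) (e x)" "(e^^n) y = (e^^m) (e y)" using m by (simp_all only: funpow_Suc_right comp_def)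
  thus "x = y" using n xy by metis
qed

lemma emap_inj:
  assumes "inj_on f (verts A)" "ewf A"
  shows "inj_on (emap f) (edges A)"
  using assms unfolding ewf_def inj_on_def emap_def by (auto split: prod.splits) (fastforce+)?

lemma core_iso:
  assumes pA: "pruned A" and pB: "pruned B"
    and fA: "finite (verts A)" "finite (edges A)" and fB: "finite (verts B)" "finite (edges B)"
    and wA: "ewf A" and wB: "ewf B"
    and f: "morph A B f" and g: "morph B A g"
  shows "tiso A B"
proof -
  have i1: "inj_on (g \<circ> f) (verts A)" using pruned_endo_inj[OF pA fA(1) morph_comp[OF f g]] .
  have i2: "inj_on (f \<circ> g) (verts B)" using pruned_endo_inj[OF pB fB(1) morph_comp[OF g f]] .
  have fi: "inj_on f (verts A)" using i1 inj_on_imageI2 by blast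
  have gi: "inj_on g (verts B)" using i2 inj_on_imageI2 by blast
  have fs: "f ` verts A \<subseteq> verts B" "emap f ` edges A \<subseteq> edges B" using f by (auto simp: morph_def)
  have gs: "g ` verts B \<subseteq> verts A" "emap g ` edges B \<subseteq> edges A" using g by (auto simp: morph_def)
  have efi: "inj_on (emap f) (edges A)" using emap_inj[OF fi wA] .
  have egi: "inj_on (emap g) (edges B)" using emap_inj[OF gi wB] .
  have c1: "card (verts A) \<le> card (verts B)" using card_inj_on_le[OF fi fs(1) fB(1)] .
  have c2: "card (verts B) \<le> card (verts A)" using card_inj_on_le[OF gi gs(1) fA(1)] .
  have c3: "card (edges A) \<le> card (edges B)" using card_inj_on_le[OF efi fs(2) fB(2)] .
  have c4: "card (edges B) \<le> card (edges A)" using card_inj_on_le[OF egi gs(2) fA(2)] .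
  have "f ` verts A = verts B"
    using card_subset_eq[OF fB(1) fs(1)] card_image[OF fi] c1 c2 by simp
  moreover have "emap f ` edges A = edges B"
    using card_subset_eq[OF fB(2) fs(2)] card_image[OF efi] c3 c4 by simp
  ultimately show ?thesis unfolding tiso_def bij_betw_def using f fi efi by blast
qed


lemma prod_left:
  assumes "verts P \<subseteq> verts X" "edges P \<subseteq> edges X" "st P = st X" "en P = st X"
  shows "morph (tprod P X) X (case_sum id id)" "morph X (tprod P X) (injY P X)"
proof -
  have hi: "case_sum id id (injY P X y) = y" for y using assms(4) by (simp add: injY_def)
  have e1: "emap (case_sum id id) (emap Inl e) = e" for e :: "'a \<times> 'b \<times> 'a"
    by (auto simp: emap_def split: prod.splits)
  have e2: "emap (case_sum id id) (emap (injY P X) e) = e" for e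
    using hi by (auto simp: emap_def split: prod.splits)
  show "morph (tprod P X) X (case_sum id id)"
  proof -
    have "emap (case_sum id id) ` edges (tprod P X) = edges P \<union> edges X"
      unfolding tprod_def by (simp add: image_Un image_image e1 e2)
    thus ?thesis unfolding morph_def using assms hi by (auto simp: tprod_def)
  qed
  show "morph X (tprod P X) (injY P X)"
    unfolding morph_def using assms by (auto simp: tprod_def injY_def)
qed

lemma prod_right:
  assumes "verts R \<subseteq> verts X" "edges R \<subseteq> edges X" "st R = en X" "en R = en X"
  shows "morph (tprod X R) X (case_sum id id)" "morph X (tprod X R) Inl"
proof -
  have hi: "case_sum id id (injY X R y) = y" for y using assms(3) by (simp add: injY_def)
  have e1: "emap (case_sum id id) (emap Inl e) = e" for e :: "'a \<times> 'b \<times> 'a"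
    by (auto simp: emap_def split: prod.splits)
  have e2: "emap (case_sum id id) (emap (injY X R) e) = e" for e
    using hi by (auto simp: emap_def split: prod.splits)
  show "morph (tprod X R) X (case_sum id id)"
  proof -
    have "emap (case_sum id id) ` edges (tprod X R) = edges X \<union> edges R"
      unfolding tprod_def by (simp add: image_Un image_image e1 e2)
    thus ?thesis unfolding morph_def using assms hi by (auto simp: tprod_def)
  qed
  show "morph X (tprod X R) Inl"
    unfolding morph_def using assms by (auto simp: tprod_def injY_def)
qed

lemma retr_morph: "retraction A r \<Longrightarrow> morph A (retract_img A r) r"
  by (auto simp: retraction_def morph_def retract_img_def)

lemma retr_sub: "retraction A r \<Longrightarrow> verts (retract_img A r) \<subseteq> verts A \<and> edges (retract_img A r) \<subseteq> edges A"
  by (auto simp: retraction_def morph_def retract_img_def)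

lemma retr_morph2: "retraction A r \<Longrightarrow> morph A B h \<Longrightarrow> morph (retract_img A r) B h"
proof -
  assume a: "retraction A r" "morph A B h"
  have "verts (retract_img A r) \<subseteq> verts A" "edges (retract_img A r) \<subseteq> edges A" using retr_sub[OF a(1)] by auto
  thus ?thesis using a(2) unfolding morph_def by (simp add: retract_img_def) (meson image_mono order_trans)
qed

lemma retr_fin: "finite (verts A) \<Longrightarrow> finite (edges A) \<Longrightarrow>
   finite (verts (retract_img A r)) \<and> finite (edges (retract_img A r))"
  by (auto simp: retract_img_def)

lemma retr_ewf: "ewf A \<Longrightarrow> ewf (retract_img A r)"
  by (force simp: ewf_def retract_img_def emap_def)

lemma prod_fin: "finite (verts A) \<Longrightarrow> finite (edges A) \<Longrightarrow> finite (verts B) \<Longrightarrow> finite (edges B) \<Longrightarrow>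
   finite (verts (tprod A B)) \<and> finite (edges (tprod A B))"
  by (auto simp: tprod_def)

lemma prod_ewf: "ewf A \<Longrightarrow> ewf B \<Longrightarrow> ewf (tprod A B)"
  by (force simp: ewf_def tprod_def emap_def)

theorem proposition4p7:
  fixes Sig :: "'l set" and X :: "('v, 'l) stree"
  assumes "pruned_tree Sig X"
  shows "(\<forall>P Q. is_pruned_retract P (tplus X) \<and> is_pruned_retract Q (tprod P X)
                 \<longrightarrow> tiso Q X) \<and>
         (\<forall>R Q. is_pruned_retract R (tstar X) \<and> is_pruned_retract Q (tprod X R)
                 \<longrightarrow> tiso Q X)"
proof -
  have pX: "pruned X" and fX: "finite (verts X)" "finite (edges X)" and wX: "ewf X"
    using assms by (auto simp: pruned_tree_def is_tree_def ewf_def)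
  have A: "tiso Q X" if P: "is_pruned_retract P (tplus X)" and Q: "is_pruned_retract Q (tprod P X)" for P Q
  proof -
    obtain r where r: "retraction (tplus X) r" "P = retract_img (tplus X) r" "pruned P"
      using P by (auto simp: is_pruned_retract_def)
    obtain r' where r': "retraction (tprod P X) r'" "Q = retract_img (tprod P X) r'" "pruned Q"
      using Q by (auto simp: is_pruned_retract_def)
    have Psub: "verts P \<subseteq> verts X" "edges P \<subseteq> edges X" "st P = st X" "en P = st X"
      using retr_sub[OF r(1)] r(2) by (auto simp: tplus_def retract_img_def)
    have fP: "finite (verts P)" "finite (edges P)" using Psub fX finite_subset by auto
    have wP: "ewf P" using retr_ewf[of "tplus X" r] wX r(2) by (simp add: ewf_def tplus_def)
    have fQ: "finite (verts Q)" "finite (edges Q)" using r'(2) retr_fin prod_fin[OF fP fX] by blast+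
    have wQ: "ewf Q" using r'(2) retr_ewf prod_ewf[OF wP wX] by blast
    have m1: "morph Q X (case_sum id id)" using r' retr_morph2 prod_left(1)[OF Psub] by blast
    have m2: "morph X Q (r' \<circ> injY P X)" using r' retr_morph morph_comp prod_left(2)[OF Psub] by blast
    show ?thesis using core_iso[OF r'(3) pX fQ fX wQ wX m1 m2] .
  qed
  have B: "tiso Q X" if R: "is_pruned_retract R (tstar X)" and Q: "is_pruned_retract Q (tprod X R)" for R Q
  proof -
    obtain r where r: "retraction (tstar X) r" "R = retract_img (tstar X) r" "pruned R"
      using R by (auto simp: is_pruned_retract_def)
    obtain r' where r': "retraction (tprod X R) r'" "Q = retract_img (tprod X R) r'" "pruned Q"
      using Q by (auto simp: is_pruned_retract_def)
    have Rsub: "verts R \<subseteq> verts X" "edges R \<subseteq> edges X" "st R = en X" "en R = en X"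
      using retr_sub[OF r(1)] r(2) by (auto simp: tstar_def retract_img_def)
    have fR: "finite (verts R)" "finite (edges R)" using Rsub fX finite_subset by auto
    have wR: "ewf R" using retr_ewf[of "tstar X" r] wX r(2) by (simp add: ewf_def tstar_def)
    have fQ: "finite (verts Q)" "finite (edges Q)" using r'(2) retr_fin prod_fin[OF fX fR] by blast+
    have wQ: "ewf Q" using r'(2) retr_ewf prod_ewf[OF wX wR] by blast
    have m1: "morph Q X (case_sum id id)" using r' retr_morph2 prod_right(1)[OF Rsub] by blast
    have m2: "morph X Q (r' \<circ> Inl)" using r' retr_morph morph_comp prod_right(2)[OF Rsub] by blast
    show ?thesis using core_iso[OF r'(3) pX fQ fX wQ wX m1 m2] .
  qed
  show ?thesis using A B by blast
qed

end
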